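(* Let $\lambda:V^X\to\mathbb{N}\cup\{+\infty\}$ be a labeling function, $v\in V^X$, and let $\rho=\rho_0\rho_1\dots$ be a $\lambda$-consistent play in $\mathrm{Plays}_X(v)$. Then there exists an infinite path $\pi=\pi_0\pi_1\dots$ in $\mathbb{C}(\lambda)$ such that $\pi_0=v^C$ and, for every $n\in\mathbb{N}$, $\pi_n$ is of the form $(\rho_n,(c'_i)_{i\in\Pi})$ (i.e., $\rho$ is the projection of $\pi$ on $V^X$).
   Context: Let $\mathcal{G}$ be a quantitative reachability game on an arena $G=(\Pi,V,(V_i)_{i\in\Pi},E)$ (finite player set $\Pi$, finite vertex set $V$, partition $(V_i)$, every vertex has a successor) with targets $F_i\subseteq V$. Its extended arena $X$ has vertices $V^X=V\times2^\Pi$, edges $((v,I),(v',I'))\in E^X$ iff $(v,v')\in E$ and $I'=I\cup\{i:v'\in F_i\}$, $(v,I)\in V^X_i$ iff $v\in V_i$; for $u\in V^X$, $I(u)$ is its second component. For a play $\rho$ of $X$, $\mathrm{Cost}_i(\rho)$ is the least $k$ with $i\in I(\rho_k)$, or $+\infty$; $\mathrm{Plays}_X(v)$ is the set of plays of $X$ starting at $v$. A play $\rho$ of $X$ is $\lambda$-consistent if $\mathrm{Cost}_i(\rho_{\ge n})\le\lambda(\rho_n)$ for all $n$ and all $i$ with $\rho_n\in V^X_i$, where $\rho_{\ge n}=\rho_n\rho_{n+1}\dots$. Counter graph $\mathbb{C}(\lambda)$: let $K$ be the maximum of the finite values of $\lambda$ ($0$ if none) and $\mathcal{K}=\{0,\dots,K\}\cup\{+\infty\}$;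 vertices are $V^X\times\mathcal{K}^\Pi$, and there is an edge from $(u,(c_i)_i)$ to $(u',(c'_i)_i)$ iff $(u,u')\in E^X$ and for every $i\in\Pi$: either $i\in I(u')$ and $c'_i=0$; or $i\notin I(u')$, $u'\notin V^X_i$, $c_i>1$ and $c'_i=c_i-1$; or $i\notin I(u')$, $u'\in V^X_i$, $c_i>1$ and $c'_i=\min(c_i-1,\lambda(u'))$ (with $+\infty-1=+\infty$). The starting vertex of $u\in V^X$ is $u^C=(u,(c_i)_i)$ with $c_i=0$ if $i\in I(u)$, $c_i=\lambda(u)$ if $i\notin I(u)$ and $u\in V^X_i$, and $c_i=+\infty$ otherwise. *)

theory Defs
  imports Main "HOL-Library.Extended_Nat"
begin

text \<open>Arena: players are the elements of a finite type 'p (so \<Pi> = UNIV),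
 vertices V :: 'v set, edges E, the partition (V_i) is given by an owner
 function (v \<in> V_i iff owner v = i), targets F i.\<close>

definition arena :: "'v set \<Rightarrow> ('v \<times> 'v) set \<Rightarrow> ('p \<Rightarrow> 'v set) \<Rightarrow> bool" where
  "arena V E F \<longleftrightarrow> finite V \<and> E \<subseteq> V \<times> V \<and> (\<forall>v\<in>V. \<exists>v'. (v, v') \<in> E)
     \<and> (\<forall>i. F i \<subseteq> V)"

definition ext_vertices :: "'v set \<Rightarrow> ('v \<times> 'p set) set" where
  "ext_vertices V = V \<times> UNIV"

definition ext_edges :: "('v \<times> 'v) set \<Rightarrow> ('p \<Rightarrow> 'v set)
    \<Rightarrow> (('v \<times> 'p set) \<times> ('v \<times> 'p set)) set" where
  "ext_edges E F = {((v, I), (v', I')). (v, v') \<in> E \<and> I' = I \<union> {i. v' \<in> F i}}"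

definition ext_owner :: "('v \<Rightarrow> 'p) \<Rightarrow> 'v \<times> 'p set \<Rightarrow> 'p" where
  "ext_owner owner u = owner (fst u)"

definition Iof :: "'v \<times> 'p set \<Rightarrow> 'p set" where
  "Iof u = snd u"

definition plays_from :: "'v set \<Rightarrow> ('v \<times> 'v) set \<Rightarrow> ('p \<Rightarrow> 'v set) \<Rightarrow> 'v \<times> 'p set
    \<Rightarrow> (nat \<Rightarrow> 'v \<times> 'p set) set" where
  "plays_from V E F u = {\<rho>. \<rho> 0 = u \<and> (\<forall>n. \<rho> n \<in> ext_vertices V)
      \<and> (\<forall>n. (\<rho> n, \<rho> (Suc n)) \<in> ext_edges E F)}"

definition cost :: "'p \<Rightarrow> (nat \<Rightarrow> 'v \<times> 'p set) \<Rightarrow> enat" where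
  "cost i \<rho> = (if \<exists>k. i \<in> Iof (\<rho> k) then enat (LEAST k. i \<in> Iof (\<rho> k)) else \<infinity>)"

definition suffix :: "(nat \<Rightarrow> 'a) \<Rightarrow> nat \<Rightarrow> nat \<Rightarrow> 'a" where
  "suffix \<rho> n = (\<lambda>k. \<rho> (n + k))"

definition lam_consistent :: "('v \<Rightarrow> 'p) \<Rightarrow> ('v \<times> 'p set \<Rightarrow> enat) \<Rightarrow> (nat \<Rightarrow> 'v \<times> 'p set) \<Rightarrow> bool" where
  "lam_consistent owner lam \<rho> \<longleftrightarrow>
     (\<forall>n i. ext_owner owner (\<rho> n) = i \<longrightarrow> cost i (suffix \<rho> n) \<le> lam (\<rho> n))"

definition Kmax :: "'v set \<Rightarrow> ('v \<times> 'p set \<Rightarrow> enat) \<Rightarrow> nat" where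
  "Kmax V lam = (let S = {k. \<exists>u \<in> ext_vertices V. lam u = enat k} in
                  if S = {} then 0 else Max S)"

definition Kset :: "'v set \<Rightarrow> ('v \<times> 'p set \<Rightarrow> enat) \<Rightarrow> enat set" where
  "Kset V lam = {enat k | k. k \<le> Kmax V lam} \<union> {\<infinity>}"

definition counter_vertices :: "'v set \<Rightarrow> ('v \<times> 'p set \<Rightarrow> enat)
    \<Rightarrow> (('v \<times> 'p set) \<times> ('p \<Rightarrow> enat)) set" where
  "counter_vertices V lam = ext_vertices V \<times> {c. \<forall>i. c i \<in> Kset V lam}"

definition counter_edge :: "'v set \<Rightarrow> ('v \<times> 'v) set \<Rightarrow> ('v \<Rightarrow> 'p) \<Rightarrow> ('p \<Rightarrow> 'v set)
    \<Rightarrow> ('v \<times> 'p set \<Rightarrow> enat)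
    \<Rightarrow> ('v \<times> 'p set) \<times> ('p \<Rightarrow> enat) \<Rightarrow> ('v \<times> 'p set) \<times> ('p \<Rightarrow> enat) \<Rightarrow> bool" where
  "counter_edge V E owner F lam x y \<longleftrightarrow>
     x \<in> counter_vertices V lam \<and> y \<in> counter_vertices V lam \<and>
     (let (u, c) = x; (u', c') = y in
       (u, u') \<in> ext_edges E F \<and>
       (\<forall>i. (i \<in> Iof u' \<and> c' i = 0)
          \<or> (i \<notin> Iof u' \<and> ext_owner owner u' \<noteq> i \<and> c i > 1 \<and> c' i = c i - 1)
          \<or> (i \<notin> Iof u' \<and> ext_owner owner u' = i \<and> c i > 1 \<and> c' i = min (c i - 1) (lam u'))))"

definition start_vertex :: "('v \<Rightarrow> 'p) \<Rightarrow> ('v \<times> 'p set \<Rightarrow> enat) \<Rightarrow> 'v \<times> 'p set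
    \<Rightarrow> ('v \<times> 'p set) \<times> ('p \<Rightarrow> enat)" where
  "start_vertex owner lam u =
     (u, (\<lambda>i. if i \<in> Iof u then 0
              else if ext_owner owner u = i then lam u else \<infinity>))"

end

theory Submission
  imports Defs
begin

lemma cost_zero_iff: "cost i r = 0 \<longleftrightarrow> i \<in> Iof (r 0)"
  unfolding cost_def
  by (auto simp: zero_enat_def intro: Least_eq_0) (metis (mono_tags) LeastI)

lemma cost_step:
  assumes "i \<notin> Iof (r n)"
  shows "cost i (suffix r n) = eSuc (cost i (suffix r (Suc n)))"
proof (cases "\<exists>k. i \<in> Iof (r (n + k))")
  case True
  then have T2: "\<exists>k. i \<in> Iof (r (Suc n + k))"
    using assms by (metis add.right_neutral add_Suc_shift not0_implies_Suc)
  have "(LEAST k. i \<in> Iof (r (n + k))) = Suc (LEAST k. i \<in> Iof (r (Suc n + k)))"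
  proof -
    obtain k where k: "i \<in> Iof (r (n + k))" using True by blast
    show ?thesis using Least_Suc[of "\<lambda>k. i \<in> Iof (r (n + k))", OF k] assms by simp
  qed
  then show ?thesis using True T2 unfolding cost_def suffix_def
    by (simp add: eSuc_enat)
next
  case False
  then have "\<not> (\<exists>k. i \<in> Iof (r (Suc n + k)))"
    by (metis add_Suc_shift add_Suc)
  then show ?thesis using False unfolding cost_def suffix_def by simp
qed

lemma eSuc_le_minus: "eSuc x \<le> c \<Longrightarrow> x \<le> c - (1::enat)"
  by (cases c; cases x) (auto simp: eSuc_enat one_enat_def)

lemma one_lt_eSuc: "x \<noteq> 0 \<Longrightarrow> 1 < eSuc (x::enat)"
  by (cases x) (auto simp: eSuc_enat one_enat_def zero_enat_def)

lemma Kset_minus: "x \<in> Kset V lam \<Longrightarrow> x - 1 \<in> Kset V lam"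
  unfolding Kset_def
  by (auto simp: one_enat_def)

lemma Kset_lam:
  fixes u :: "'a \<times> 'b::finite set"
  assumes "finite V" "u \<in> ext_vertices V"
  shows "lam u \<in> Kset V lam"
proof (cases "lam u")
  case (enat k)
  define S where "S = {k. \<exists>u \<in> ext_vertices V. lam u = enat k}"
  have "S \<subseteq> (\<lambda>u. case lam u of enat k \<Rightarrow> k | \<infinity> \<Rightarrow> 0) ` ext_vertices V"
    unfolding S_def by (force split: enat.splits)
  moreover have "finite (ext_vertices V :: ('a \<times> 'b set) set)"
    using assms(1) unfolding ext_vertices_def by simp
  ultimately have fS: "finite S" by (meson finite_surj)
  have "k \<in> S" using enat assms unfolding S_def by blast
  then have "k \<le> Kmax V lam" using fS unfolding Kmax_def S_def[symmetric] Let_def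
    by auto
  then show ?thesis using enat unfolding Kset_def by auto
qed (simp add: Kset_def)

lemma Kset_zero: "0 \<in> Kset V lam"
  unfolding Kset_def by (auto simp: zero_enat_def)

lemma Kset_inf: "\<infinity> \<in> Kset V lam"
  unfolding Kset_def by auto

lemma Kset_min: "x \<in> Kset V lam \<Longrightarrow> y \<in> Kset V lam \<Longrightarrow> min x y \<in> Kset V lam"
  by (simp add: min_def)

theorem lemma3p5:
  fixes V :: "'v set" and E :: "('v \<times> 'v) set" and owner :: "'v \<Rightarrow> 'p::finite"
    and F :: "'p \<Rightarrow> 'v set" and lam :: "'v \<times> 'p set \<Rightarrow> enat"
    and v :: "'v \<times> 'p set" and \<rho> :: "nat \<Rightarrow> 'v \<times> 'p set"
  assumes "arena V E F"
    and "v \<in> ext_vertices V"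
    and "\<rho> \<in> plays_from V E F v"
    and "lam_consistent owner lam \<rho>"
  shows "\<exists>\<pi> :: nat \<Rightarrow> ('v \<times> 'p set) \<times> ('p \<Rightarrow> enat).
           \<pi> 0 = start_vertex owner lam v
         \<and> (\<forall>n. \<pi> n \<in> counter_vertices V lam)
         \<and> (\<forall>n. counter_edge V E owner F lam (\<pi> n) (\<pi> (Suc n)))
         \<and> (\<forall>n. fst (\<pi> n) = \<rho> n)"
proof -
  have finV: "finite V" using assms(1) unfolding arena_def by simp
  have r0: "\<rho> 0 = v" and rV: "\<And>n. \<rho> n \<in> ext_vertices V"
    and rE: "\<And>n. (\<rho> n, \<rho> (Suc n)) \<in> ext_edges E F"
    using assms(3) unfolding plays_from_def by auto
  have mono: "\<And>n. Iof (\<rho> n) \<subseteq> Iof (\<rho> (Suc n))"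
    subgoal for n using rE[of n] by (cases "\<rho> n"; cases "\<rho> (Suc n)") (auto simp: ext_edges_def Iof_def)
    done
  have cons: "\<And>n. cost (ext_owner owner (\<rho> n)) (suffix \<rho> n) \<le> lam (\<rho> n)"
    using assms(4) unfolding lam_consistent_def by blast
  define upd where "upd = (\<lambda>u' (c :: 'p \<Rightarrow> enat) i. if i \<in> Iof u' then 0
      else if ext_owner owner u' = i then min (c i - 1) (lam u') else c i - 1)"
  define C where "C = rec_nat (snd (start_vertex owner lam v)) (\<lambda>n c. upd (\<rho> (Suc n)) c)"
  have C0: "C 0 = snd (start_vertex owner lam v)" unfolding C_def by simp
  have CS: "\<And>n. C (Suc n) = upd (\<rho> (Suc n)) (C n)" unfolding C_def by simp
  define P where "P n \<longleftrightarrow> (\<forall>i. C n i \<in> Kset V lam \<and> (i \<in> Iof (\<rho> n) \<longrightarrow> C n i = 0)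
      \<and> (i \<notin> Iof (\<rho> n) \<longrightarrow> cost i (suffix \<rho> n) \<le> C n i))" for n
  have inv: "P n" for n
  proof (induction n)
    case 0
    show ?case unfolding P_def
    proof (intro allI conjI impI)
      fix i
      show "C 0 i \<in> Kset V lam"
        using C0 Kset_lam[OF finV assms(2)] Kset_zero Kset_inf
        unfolding start_vertex_def by auto
      show "i \<in> Iof (\<rho> 0) \<Longrightarrow> C 0 i = 0" using C0 r0 unfolding start_vertex_def by auto
      show "cost i (suffix \<rho> 0) \<le> C 0 i" if "i \<notin> Iof (\<rho> 0)"
        using C0 r0 that cons[of 0] unfolding start_vertex_def by auto
    qed
  next
    case (Suc n)
    show ?case unfolding P_def
    proof (intro allI conjI impI)
      fix i
      have kl: "lam (\<rho> (Suc n)) \<in> Kset V lam" using Kset_lam[OF finV rV] .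
      show "C (Suc n) i \<in> Kset V lam"
      proof -
        have "C n i \<in> Kset V lam" using Suc unfolding P_def by blast
        then have "C n i - 1 \<in> Kset V lam" by (rule Kset_minus)
        then show ?thesis using kl Kset_zero[of V lam] Kset_min[of "C n i - 1" V lam]
          unfolding CS upd_def by auto
      qed
      show "i \<in> Iof (\<rho> (Suc n)) \<Longrightarrow> C (Suc n) i = 0" unfolding CS upd_def by simp
      assume ni: "i \<notin> Iof (\<rho> (Suc n))"
      then have ni0: "i \<notin> Iof (\<rho> n)" using mono by blast
      have st: "cost i (suffix \<rho> n) = eSuc (cost i (suffix \<rho> (Suc n)))"
        using cost_step[of i \<rho> n, OF ni0] .
      have le: "cost i (suffix \<rho> n) \<le> C n i" using Suc ni0 unfolding P_def by blast
      have a: "cost i (suffix \<rho> (Suc n)) \<le> C n i - 1"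
        using le st eSuc_le_minus by metis
      show "cost i (suffix \<rho> (Suc n)) \<le> C (Suc n) i"
      proof (cases "ext_owner owner (\<rho> (Suc n)) = i")
        case True
        then have "cost i (suffix \<rho> (Suc n)) \<le> lam (\<rho> (Suc n))" using cons by blast
        then show ?thesis using a True ni unfolding CS upd_def by simp
      next
        case False
        then show ?thesis using a ni unfolding CS upd_def by simp
      qed
    qed
  qed
  define \<pi> where "\<pi> n = (\<rho> n, C n)" for n
  show ?thesis
  proof (intro exI[of _ \<pi>] conjI allI)
    show "\<pi> 0 = start_vertex owner lam v"
      unfolding \<pi>_def C0 r0 by (simp add: start_vertex_def)
    show vert: "\<pi> n \<in> counter_vertices V lam" for n
      using inv[of n] rV[of n] unfolding \<pi>_def P_def counter_vertices_def by auto
    show "fst (\<pi> n) = \<rho> n" for n unfolding \<pi>_def by simp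
    show "counter_edge V E owner F lam (\<pi> n) (\<pi> (Suc n))" for n
    proof -
      have "\<forall>i. (i \<in> Iof (\<rho> (Suc n)) \<and> C (Suc n) i = 0)
          \<or> (i \<notin> Iof (\<rho> (Suc n)) \<and> ext_owner owner (\<rho> (Suc n)) \<noteq> i \<and> C n i > 1 \<and> C (Suc n) i = C n i - 1)
          \<or> (i \<notin> Iof (\<rho> (Suc n)) \<and> ext_owner owner (\<rho> (Suc n)) = i \<and> C n i > 1
              \<and> C (Suc n) i = min (C n i - 1) (lam (\<rho> (Suc n))))"
      proof
        fix i
        show "(i \<in> Iof (\<rho> (Suc n)) \<and> C (Suc n) i = 0)
          \<or> (i \<notin> Iof (\<rho> (Suc n)) \<and> ext_owner owner (\<rho> (Suc n)) \<noteq> i \<and> C n i > 1 \<and> C (Suc n) i = C n i - 1)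
          \<or> (i \<notin> Iof (\<rho> (Suc n)) \<and> ext_owner owner (\<rho> (Suc n)) = i \<and> C n i > 1
              \<and> C (Suc n) i = min (C n i - 1) (lam (\<rho> (Suc n))))"
        proof (cases "i \<in> Iof (\<rho> (Suc n))")
          case True then show ?thesis unfolding CS upd_def by simp
        next
          case ni: False
          then have ni0: "i \<notin> Iof (\<rho> n)" using mono by blast
          have st: "cost i (suffix \<rho> n) = eSuc (cost i (suffix \<rho> (Suc n)))"
            using cost_step[of i \<rho> n, OF ni0] .
          have "cost i (suffix \<rho> (Suc n)) \<noteq> 0"
            using ni cost_zero_iff[of i "suffix \<rho> (Suc n)"] by (simp add: suffix_def)
          then have "1 < cost i (suffix \<rho> n)" using st one_lt_eSuc by metis
          moreover have "cost i (suffix \<rho> n) \<le> C n i" using inv[of n] ni0 unfolding P_def by blast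
          ultimately have "1 < C n i" by order
          then show ?thesis using ni unfolding CS upd_def by auto
        qed
      qed
      then show ?thesis using vert[of n] vert[of "Suc n"] rE[of n]
        unfolding counter_edge_def \<pi>_def by simp
    qed
  qed
qed

end
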